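(* Let $A \in \mathbb{Q}^{m\times n}$, $b \in \mathbb{Q}^m$, and $E = [c_1,d_1]\cup\cdots\cup[c_k,d_k]$ with $0 = c_1 < d_1 < c_2 < \cdots < c_k < d_k = 1$. Let $\sigma \in [k]^n$ be such that the box $\prod_{i=1}^n [c_{\sigma_i}, d_{\sigma_i}]$ is disjoint from $K_1 = \{x \in [0,1]^n : Ax \le b\}$. Let $K_2 = \{ p \in [0,1]^{n\times k} : \sum_{i,j} p_{ij} = 1,\ p_{ij} \ge 0,\ p_{i\sigma_i} = 0 \ \forall i\}$ and \[ f(x,p) = \sum_{i=1}^n \sum_{j=1}^k p_{ij}\left[(1-x_i)\frac{U_0(j)}{U_0(\sigma_i)} + x_i\frac{U_1(j)}{U_1(\sigma_i)}\right]. \] Then for every $x \in K_1$ there exists $p \in K_2$ with $f(x,p) \ge 1$.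
   Context: For $i \in [k]$, $U_0(i) = \prod_{j=1}^{i-1} \frac{1 - c_{j+1}}{1 - d_j}$ and $U_1(i) = \prod_{l=i}^{k-1} \frac{d_l}{c_{l+1}}$ (empty products equal $1$). *)

theory Defs
  imports "HOL-Analysis.Analysis"
begin

text \<open>Indices are 1-based: i in {1..n}, j in {1..k}, rows r in {1..m}.\<close>

definition U0 :: "(nat \<Rightarrow> real) \<Rightarrow> (nat \<Rightarrow> real) \<Rightarrow> nat \<Rightarrow> real" where
  "U0 c d i = (\<Prod>j\<in>{1..<i}. (1 - c (j+1)) / (1 - d j))"

definition U1 :: "(nat \<Rightarrow> real) \<Rightarrow> (nat \<Rightarrow> real) \<Rightarrow> nat \<Rightarrow> nat \<Rightarrow> real" where
  "U1 c d k i = (\<Prod>l\<in>{i..<k}. d l / c (l+1))"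

definition K1 :: "nat \<Rightarrow> nat \<Rightarrow> (nat \<Rightarrow> nat \<Rightarrow> real) \<Rightarrow> (nat \<Rightarrow> real) \<Rightarrow> (nat \<Rightarrow> real) set" where
  "K1 m n A b = {x. (\<forall>i\<in>{1..n}. 0 \<le> x i \<and> x i \<le> 1) \<and>
                    (\<forall>r\<in>{1..m}. (\<Sum>i=1..n. A r i * x i) \<le> b r)}"

definition K2 :: "nat \<Rightarrow> nat \<Rightarrow> (nat \<Rightarrow> nat) \<Rightarrow> (nat \<Rightarrow> nat \<Rightarrow> real) set" where
  "K2 n k \<sigma> = {p. (\<forall>i\<in>{1..n}. \<forall>j\<in>{1..k}. 0 \<le> p i j \<and> p i j \<le> 1) \<and>
                   (\<Sum>i=1..n. \<Sum>j=1..k. p i j) = 1 \<and>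
                   (\<forall>i\<in>{1..n}. p i (\<sigma> i) = 0)}"

definition fobj :: "nat \<Rightarrow> nat \<Rightarrow> (nat \<Rightarrow> real) \<Rightarrow> (nat \<Rightarrow> real) \<Rightarrow> (nat \<Rightarrow> nat)
    \<Rightarrow> (nat \<Rightarrow> real) \<Rightarrow> (nat \<Rightarrow> nat \<Rightarrow> real) \<Rightarrow> real" where
  "fobj n k c d \<sigma> x p = (\<Sum>i=1..n. \<Sum>j=1..k. p i j *
      ((1 - x i) * (U0 c d j / U0 c d (\<sigma> i)) + x i * (U1 c d k j / U1 c d k (\<sigma> i))))"

end

theory Submission
  imports Defs
begin

lemma cd_mono:
  fixes c d :: "nat \<Rightarrow> real"
  assumes cd: "\<forall>j\<in>{1..k}. c j < d j"
    and dc: "\<forall>j\<in>{1..<k}. d j < c (j+1)"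
    and j: "1 \<le> j" "j \<le> l" "l \<le> k"
  shows "c j \<le> c l \<and> d j \<le> d l"
  using j(2,3)
proof (induction l rule: dec_induct)
  case base then show ?case by simp
next
  case (step l)
  have "d l < c (l+1)" using dc step j by auto
  moreover have "c l < d l" "c (l+1) < d (l+1)" using cd step j by auto
  ultimately show ?case using step by auto
qed

theorem claim3p2:
  fixes m n k :: nat and A :: "nat \<Rightarrow> nat \<Rightarrow> real" and b c d :: "nat \<Rightarrow> real"
    and \<sigma> :: "nat \<Rightarrow> nat"
  assumes A_rat: "\<forall>r\<in>{1..m}. \<forall>i\<in>{1..n}. A r i \<in> \<rat>"
    and b_rat: "\<forall>r\<in>{1..m}. b r \<in> \<rat>"
    and k_pos: "k \<ge> 1"
    and c1: "c 1 = 0"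
    and cd: "\<forall>j\<in>{1..k}. c j < d j"
    and dc: "\<forall>j\<in>{1..<k}. d j < c (j+1)"
    and dk: "d k = 1"
    and \<sigma>_range: "\<forall>i\<in>{1..n}. \<sigma> i \<in> {1..k}"
    and disj: "\<forall>x\<in>K1 m n A b. \<not> (\<forall>i\<in>{1..n}. c (\<sigma> i) \<le> x i \<and> x i \<le> d (\<sigma> i))"
  shows "\<forall>x\<in>K1 m n A b. \<exists>p\<in>K2 n k \<sigma>. fobj n k c d \<sigma> x p \<ge> 1"
proof
  fix x assume xK: "x \<in> K1 m n A b"
  have c0: "c j \<ge> 0" if "1 \<le> j" "j \<le> k" for j
    using cd_mono[OF cd dc, of 1 j] that c1 by auto
  have d1: "d j \<le> 1" if "1 \<le> j" "j \<le> k" for j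
    using cd_mono[OF cd dc, of j k] that dk by auto
  have U0pos: "U0 c d s > 0" if "1 \<le> s" "s \<le> k" for s
    unfolding U0_def
  proof (rule prod_pos)
    fix j assume "j \<in> {1..<s}"
    then have j: "1 \<le> j" "j < k" using that by auto
    have "d j < c (j+1)" using dc j by auto
    moreover have "c (j+1) < d (j+1)" using cd j by auto
    moreover have "d (j+1) \<le> 1" using d1 j by auto
    ultimately show "0 < (1 - c (j+1)) / (1 - d j)" by auto
  qed
  have U1pos: "U1 c d k s > 0" if "1 \<le> s" "s \<le> k" for s
    unfolding U1_def
  proof (rule prod_pos)
    fix j assume "j \<in> {s..<k}"
    then have j: "1 \<le> j" "j < k" using that by auto
    have "d j < c (j+1)" using dc j by auto
    moreover have "c j < d j" using cd j by auto
    moreover have "c j \<ge> 0" using c0 j by auto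
    ultimately show "0 < d j / c (j+1)" by auto
  qed
  have U0s: "U0 c d (s+1) = U0 c d s * ((1 - c (s+1)) / (1 - d s))" if "1 \<le> s" for s
    unfolding U0_def using that by (simp add: prod.atLeastLessThan_Suc)
  have U1s: "U1 c d k s = (d s / c (s+1)) * U1 c d k (s+1)" if "s < k" for s
    unfolding U1_def using that by (simp add: prod.atLeast_Suc_lessThan)
  obtain i where i: "i \<in> {1..n}" and nb: "\<not> (c (\<sigma> i) \<le> x i \<and> x i \<le> d (\<sigma> i))"
    using disj xK by blast
  define s where "s = \<sigma> i"
  have s: "1 \<le> s" "s \<le> k" using \<sigma>_range i s_def by auto
  have x01: "0 \<le> x i" "x i \<le> 1" using xK i unfolding K1_def by auto
  have key: "\<exists>j\<in>{1..k}. j \<noteq> s \<and>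
     (1 - x i) * (U0 c d j / U0 c d s) + x i * (U1 c d k j / U1 c d k s) \<ge> 1"
  proof (cases "x i < c s")
    case True
    have s1: "s \<noteq> 1" using True c1 x01 by auto
    define t where "t = s - 1"
    have t: "1 \<le> t" "t < k" "s = t + 1" using s s1 t_def by auto
    have a: "d t < c s" using dc t by auto
    have b: "c s < d s" "d s \<le> 1" using cd d1 s by auto
    have "c t \<ge> 0" "c t < d t" using c0 cd t by auto
    then have dt: "d t > 0" by auto
    have cs: "c s > 0" "c s < 1" using a dt b by auto
    have u0: "U0 c d s = U0 c d t * ((1 - c s) / (1 - d t))" using U0s[of t] t by simp
    have r0: "U0 c d t / U0 c d s = (1 - d t) / (1 - c s)"
      unfolding u0 using t U0pos[of t] cs a by (simp add: field_simps)
    have u1: "U1 c d k t = (d t / c s) * U1 c d k s" using U1s[of t] t by simp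
    have r1: "U1 c d k t / U1 c d k s = d t / c s"
      unfolding u1 using U1pos[of s] s by simp
    have "(1 - x i) * ((1 - d t) / (1 - c s)) + x i * (d t / c s) \<ge> 1"
    proof -
      have "(1 - x i) * ((1 - d t) / (1 - c s)) + x i * (d t / c s) - 1
          = (c s - x i) * (c s - d t) / ((1 - c s) * c s)"
        using cs by (simp add: field_simps; simp add: algebra_simps)
      also have "\<dots> \<ge> 0" using cs a True by (intro divide_nonneg_pos) auto
      finally show ?thesis by simp
    qed
    then show ?thesis using r0 r1 t by (intro bexI[of _ t]) auto
  next
    case False
    then have xg: "x i > d s" using nb s_def by auto
    have sk: "s < k" using xg x01 dk by (metis not_less_iff_gr_or_eq s(2) le_less)
    have a: "d s < c (s+1)" using dc s sk by auto
    have "c (s+1) < d (s+1)" "d (s+1) \<le> 1" using cd d1 s sk by auto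
    have "c s \<ge> 0" "c s < d s" using c0 cd s by auto
    then have ds: "d s > 0" "d s < 1" using a \<open>c (s+1) < d (s+1)\<close> \<open>d (s+1) \<le> 1\<close> by auto
    have r0: "U0 c d (s+1) / U0 c d s = (1 - c (s+1)) / (1 - d s)"
      unfolding U0s[OF s(1)] using U0pos[of s] s by simp
    have u1: "U1 c d k s = (d s / c (s+1)) * U1 c d k (s+1)" using U1s[of s] sk by simp
    have r1: "U1 c d k (s+1) / U1 c d k s = c (s+1) / d s"
      unfolding u1 using U1pos[of "s+1"] sk ds a by (simp add: field_simps)
    have "(1 - x i) * ((1 - c (s+1)) / (1 - d s)) + x i * (c (s+1) / d s) \<ge> 1"
    proof -
      have "(1 - x i) * ((1 - c (s+1)) / (1 - d s)) + x i * (c (s+1) / d s) - 1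
          = (x i - d s) * (c (s+1) - d s) / ((1 - d s) * d s)"
        using ds by (simp add: field_simps; simp add: algebra_simps)
      also have "\<dots> \<ge> 0" using ds a xg by (intro divide_nonneg_pos) auto
      finally show ?thesis by simp
    qed
    then show ?thesis using r0 r1 s sk by (intro bexI[of _ "s+1"]) auto
  qed
  then obtain j where j: "j \<in> {1..k}" "j \<noteq> s"
    and val: "(1 - x i) * (U0 c d j / U0 c d s) + x i * (U1 c d k j / U1 c d k s) \<ge> 1"
    by blast
  define p where "p = (\<lambda>i' j'. if i' = i \<and> j' = j then (1::real) else 0)"
  have inner: "(\<Sum>j'=1..k. (if i' = i \<and> j' = j then (1::real) else 0)) = (if i' = i then 1 else 0)" for i'
    using j by (cases "i' = i") auto
  have tot: "(\<Sum>i'=1..n. \<Sum>j'=1..k. p i' j') = 1"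
    unfolding p_def inner using i by simp
  have pK: "p \<in> K2 n k \<sigma>"
    unfolding K2_def using tot i j s_def by (auto simp: p_def)
  define g where "g = (\<lambda>i' j'. (1 - x i') * (U0 c d j' / U0 c d (\<sigma> i')) + x i' * (U1 c d k j' / U1 c d k (\<sigma> i')))"
  have inner2: "(\<Sum>j'=1..k. p i' j' * g i' j') = (if i' = i then g i j else 0)" for i'
  proof -
    have "(\<Sum>j'=1..k. p i' j' * g i' j') = (\<Sum>j'=1..k. (if i' = i \<and> j' = j then g i j else 0))"
      by (rule sum.cong) (auto simp: p_def)
    also have "\<dots> = (if i' = i then g i j else 0)" using j by (cases "i' = i") auto
    finally show ?thesis .
  qed
  have "fobj n k c d \<sigma> x p = g i j"
  proof -
    have "fobj n k c d \<sigma> x p = (\<Sum>i'=1..n. \<Sum>j'=1..k. p i' j' * g i' j')"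
      unfolding fobj_def g_def by simp
    also have "\<dots> = (\<Sum>i'=1..n. (if i' = i then g i j else 0))" by (simp only: inner2)
    also have "\<dots> = g i j" using i by simp
    finally show ?thesis .
  qed
  moreover have "g i j \<ge> 1" using val s_def by (simp add: g_def)
  ultimately have "fobj n k c d \<sigma> x p \<ge> 1" by simp
  with pK show "\<exists>p\<in>K2 n k \<sigma>. fobj n k c d \<sigma> x p \<ge> 1" by blast
qed

end
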